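(* Let $R$ be an atomic, integrally closed integral domain satisfying condition (C): whenever $I=(a_0,a_1)$ is a primitive ideal of $R$ generated by two elements, there exists an irreducible element $\alpha\in R$ with $\alpha\in I_v$. Then $R$ is a half-factorial domain if and only if $R$ has the Z-property.
   Context: Let $K$ be the quotient field of $R$. For a fractional ideal $I$, $I^{-1}=\{t\in K : tI\subseteq R\}$ and $I_v=(I^{-1})^{-1}$. A polynomial $f\in R[x]$ is primitive if its coefficients have no common nonunit divisor in $R$; a primitive ideal is an ideal $I\subseteq R$ equal to the ideal generated by the coefficients of some primitive polynomial $f\in R[x]$. A half-factorial domain is an atomic domain in which any two factorizations of a nonzero nonunit into irreducible elements have the same length. For $a,b\in R$, $[a,b]\neq 1$ means $a$ and $b$ have a common nonunit divisor, and $[a,b]=1$ means they do not. $R$ has the Z-property if whenever $a,b,c,d,e$ are nonzero nonunits of $R$ with $abc=de$, then $[ab,d]\neq 1$ or $[ab,e]\neq 1$. *)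

theory Defs
  imports "HOL-Computational_Algebra.Fraction_Field" "HOL-Computational_Algebra.Polynomial"
begin

definition emb :: "'a::idom \<Rightarrow> 'a fract" where
  "emb a = Fraction_Field.Fract a 1"

definition gen_ideal :: "'a::idom set \<Rightarrow> 'a set" where
  "gen_ideal S = {x. \<exists>F c. finite F \<and> F \<subseteq> S \<and> x = (\<Sum>s\<in>F. c s * s)}"

definition frac_inv :: "'a::idom fract set \<Rightarrow> 'a fract set" where
  "frac_inv J = {t. \<forall>x\<in>J. t * x \<in> range emb}"

definition v_closure :: "'a::idom fract set \<Rightarrow> 'a fract set" where
  "v_closure J = frac_inv (frac_inv J)"

definition common_nonunit :: "'a::idom \<Rightarrow> 'a \<Rightarrow> bool" where
  "common_nonunit a b \<longleftrightarrow> (\<exists>d. d dvd a \<and> d dvd b \<and> \<not> d dvd 1)"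

definition primitive_poly :: "'a::idom poly \<Rightarrow> bool" where
  "primitive_poly f \<longleftrightarrow> (\<forall>d. (\<forall>i. d dvd coeff f i) \<longrightarrow> d dvd 1)"

definition primitive_ideal :: "'a::idom set \<Rightarrow> bool" where
  "primitive_ideal I \<longleftrightarrow> (\<exists>f. primitive_poly f \<and> I = gen_ideal (range (coeff f)))"

definition atomic :: "'a::idom itself \<Rightarrow> bool" where
  "atomic _ \<longleftrightarrow> (\<forall>x::'a. x \<noteq> 0 \<and> \<not> x dvd 1 \<longrightarrow>
      (\<exists>xs. xs \<noteq> [] \<and> (\<forall>y\<in>set xs. irreducible y) \<and> x = prod_list xs))"

definition half_factorial :: "'a::idom itself \<Rightarrow> bool" where
  "half_factorial T \<longleftrightarrow> atomic T \<and>
     (\<forall>(x::'a) xs ys. x \<noteq> 0 \<and> \<not> x dvd 1 \<and>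
        (\<forall>y\<in>set xs. irreducible y) \<and> x = prod_list xs \<and>
        (\<forall>y\<in>set ys. irreducible y) \<and> x = prod_list ys \<longrightarrow> length xs = length ys)"

definition integrally_closed :: "'a::idom itself \<Rightarrow> bool" where
  "integrally_closed _ \<longleftrightarrow> (\<forall>t::'a fract.
     (\<exists>p::'a poly. lead_coeff p = 1 \<and> poly (map_poly emb p) t = 0) \<longrightarrow> t \<in> range emb)"

definition Z_property :: "'a::idom itself \<Rightarrow> bool" where
  "Z_property _ \<longleftrightarrow> (\<forall>a b c d e :: 'a.
     a \<noteq> 0 \<and> \<not> a dvd 1 \<and> b \<noteq> 0 \<and> \<not> b dvd 1 \<and> c \<noteq> 0 \<and> \<not> c dvd 1 \<and>
     d \<noteq> 0 \<and> \<not> d dvd 1 \<and> e \<noteq> 0 \<and> \<not> e dvd 1 \<and> a * b * c = d * e \<longrightarrow>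
     common_nonunit (a * b) d \<or> common_nonunit (a * b) e)"

definition condition_C :: "'a::idom itself \<Rightarrow> bool" where
  "condition_C _ \<longleftrightarrow> (\<forall>(a0::'a) a1. primitive_ideal (gen_ideal {a0, a1}) \<longrightarrow>
     (\<exists>\<alpha>. irreducible \<alpha> \<and> emb \<alpha> \<in> v_closure (emb ` gen_ideal {a0, a1})))"

end

theory Submission
  imports Defs
begin


lemma emb_mult: "emb (a * b) = emb a * emb (b::'a::idom)"
  by (simp add: emb_def)
lemma emb_add: "emb (a + b) = emb a + emb (b::'a::idom)"
  by (simp add: emb_def)
lemma emb_0: "emb (0::'a::idom) = 0"
  by (simp add: emb_def Zero_fract_def)
lemma emb_sum: "emb (sum f F) = (\<Sum>s\<in>F. emb (f s :: 'a::idom))"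
proof (induction F rule: infinite_finite_induct)
  case (infinite A) then show ?case by (simp add: emb_0)
next
  case empty then show ?case by (simp add: emb_0)
next
  case (insert x F) then show ?case by (simp add: emb_add)
qed

lemma gen_ideal_mem:
  fixes t :: "'a::idom fract"
  assumes "\<forall>s\<in>S. t * emb s \<in> range emb" and "z \<in> gen_ideal S"
  shows "t * emb z \<in> range emb"
proof -
  obtain F c where F: "finite F" "F \<subseteq> S" "z = (\<Sum>s\<in>F. c s * s)"
    using assms(2) unfolding gen_ideal_def by blast
  define g where "g s = (SOME r. t * emb s = emb r)" for s
  have g: "t * emb s = emb (g s)" if "s \<in> F" for s
  proof -
    have "\<exists>r. t * emb s = emb r" using assms(1) that F(2) by blast
    then show ?thesis unfolding g_def by (rule someI_ex)
  qed
  have "t * emb z = (\<Sum>s\<in>F. emb (c s) * (t * emb s))"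
    by (simp add: F(3) emb_sum emb_mult sum_distrib_left mult_ac)
  also have "\<dots> = (\<Sum>s\<in>F. emb (c s * g s))"
    by (rule sum.cong) (simp_all add: g emb_mult)
  also have "\<dots> = emb (\<Sum>s\<in>F. c s * g s)" by (simp add: emb_sum)
  finally show ?thesis by simp
qed

lemma Fract_in_range: "(q::'a::idom) \<noteq> 0 \<Longrightarrow> Fraction_Field.Fract a q \<in> range emb \<longleftrightarrow> q dvd a"
proof
  assume q: "q \<noteq> 0" and "Fraction_Field.Fract a q \<in> range emb"
  then obtain r where "Fraction_Field.Fract a q = Fraction_Field.Fract r 1" by (auto simp: emb_def)
  then have "a * 1 = r * q" using q by (simp add: eq_fract(1))
  then show "q dvd a" by (metis dvd_triv_right mult_1_right)
next
  assume q: "q \<noteq> 0" and "q dvd a"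
  then obtain k where "a = q * k" by blast
  then have "Fraction_Field.Fract a q = emb k" using q by (simp add: emb_def eq_fract(1) mult_ac)
  then show "Fraction_Field.Fract a q \<in> range emb" by simp
qed

lemma vdiv:
  fixes x y \<alpha> q s :: "'a::idom"
  assumes "emb \<alpha> \<in> v_closure (emb ` gen_ideal {x, y})" "q \<noteq> 0"
    "q dvd s * x" "q dvd s * y"
  shows "q dvd s * \<alpha>"
proof -
  let ?t = "Fraction_Field.Fract s q"
  have e: "?t * emb z = Fraction_Field.Fract (s * z) q" for z by (simp add: emb_def)
  have "\<forall>w\<in>{x,y}. ?t * emb w \<in> range emb"
    using assms by (simp add: e Fract_in_range)
  then have "?t \<in> frac_inv (emb ` gen_ideal {x, y})"
    unfolding frac_inv_def using gen_ideal_mem by blast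
  then have "emb \<alpha> * ?t \<in> range emb"
    using assms(1) unfolding v_closure_def frac_inv_def by blast
  then have "Fraction_Field.Fract (s * \<alpha>) q \<in> range emb" by (simp add: mult.commute[of "emb \<alpha>"] e)
  then show ?thesis using assms(2) Fract_in_range by blast
qed

lemma gen_ideal_insert0: "gen_ideal (insert 0 S) = gen_ideal (S::'a::idom set)"
proof
  show "gen_ideal S \<subseteq> gen_ideal (insert 0 S)" unfolding gen_ideal_def by blast
next
  show "gen_ideal (insert 0 S) \<subseteq> gen_ideal S"
  proof
    fix z assume "z \<in> gen_ideal (insert 0 S)"
    then obtain F c where F: "finite F" "F \<subseteq> insert 0 S" "z = (\<Sum>s\<in>F. c s * s)"
      unfolding gen_ideal_def by blast
    have "z = (\<Sum>s\<in>F - {0}. c s * s)"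
      unfolding F(3) by (rule sum.mono_neutral_right) (use F in auto)
    moreover have "finite (F - {0})" "F - {0} \<subseteq> S" using F by auto
    ultimately show "z \<in> gen_ideal S" unfolding gen_ideal_def by blast
  qed
qed

lemma prim:
  fixes x y :: "'a::idom"
  assumes "\<not> common_nonunit x y"
  shows "primitive_ideal (gen_ideal {x, y})"
proof -
  let ?f = "[:x, y:]"
  have r: "range (coeff ?f) = {0, x, y}"
  proof
    show "range (coeff ?f) \<subseteq> {0, x, y}"
      by (auto simp: coeff_pCons split: nat.splits)
    show "{0, x, y} \<subseteq> range (coeff ?f)"
    proof -
      have "coeff ?f 0 = x" "coeff ?f 1 = y" "coeff ?f 2 = 0" by (simp_all add: numeral_2_eq_2)
      then show ?thesis by (metis image_eqI UNIV_I empty_subsetI insert_subset)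
    qed
  qed
  have "primitive_poly ?f"
    unfolding primitive_poly_def
  proof (intro allI impI)
    fix d assume "\<forall>i. d dvd coeff ?f i"
    then have "d dvd coeff ?f 0" "d dvd coeff ?f 1" by blast+
    then have "d dvd x" "d dvd y" by simp_all
    then show "d dvd 1" using assms unfolding common_nonunit_def by blast
  qed
  moreover have "gen_ideal (range (coeff ?f)) = gen_ideal {x, y}"
    unfolding r by (rule gen_ideal_insert0)
  ultimately show ?thesis unfolding primitive_ideal_def by blast
qed



definition FL :: "'a::idom \<Rightarrow> nat \<Rightarrow> bool" where
  "FL x k \<longleftrightarrow> (\<exists>u xs. u dvd 1 \<and> (\<forall>y\<in>set xs. irreducible y) \<and> length xs = k \<and> x = u * prod_list xs)"

lemma unit_mult': "u dvd 1 \<Longrightarrow> v dvd 1 \<Longrightarrow> u * v dvd (1::'a::comm_semiring_1)"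
  using mult_dvd_mono[of u 1 v 1] by simp

lemma unit_mult_iff': "(a * b dvd (1::'a::comm_semiring_1)) \<longleftrightarrow> a dvd 1 \<and> b dvd 1"
proof
  assume "a * b dvd 1" then show "a dvd 1 \<and> b dvd 1" using dvd_mult_left[of a b 1] dvd_mult_right[of a b 1] by simp
next
  assume "a dvd 1 \<and> b dvd 1" then show "a * b dvd 1" using unit_mult'[of a b] by simp
qed

lemma irr_unit_mult:
  assumes "u dvd 1" "irreducible (p::'a::idom)" shows "irreducible (u * p)"
proof (rule irreducibleI)
  obtain u' where u': "1 = u * u'" using assms(1) by blast
  show "u * p \<noteq> 0" using u' assms(2) by auto
  show "\<not> u * p dvd 1" using assms(2) irreducible_not_unit unit_mult_iff' by blast
  fix a b assume ab: "u * p = a * b"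
  have "p = (u' * a) * b" using ab u' by (metis mult.assoc mult.commute mult_1_left)
  then have "u' * a dvd 1 \<or> b dvd 1" using assms(2) irreducibleD by blast
  then show "a dvd 1 \<or> b dvd 1"
    by (metis assms(1) u' unit_mult' mult.assoc mult.commute mult_1_left)
qed

lemma prod_list_irr_unit: "(\<forall>y\<in>set xs. irreducible (y::'a::idom)) \<Longrightarrow> prod_list xs dvd 1 \<longleftrightarrow> xs = []"
proof (induction xs)
  case Nil then show ?case by simp
next
  case (Cons a xs) then show ?case using unit_mult_iff'[of a "prod_list xs"] by (auto simp: irreducible_not_unit)
qed

lemma prod_list_irr_nz: "(\<forall>y\<in>set xs. irreducible (y::'a::idom)) \<Longrightarrow> prod_list xs \<noteq> 0"
  by (induction xs) auto

lemma FL_mult: "FL x k \<Longrightarrow> FL y l \<Longrightarrow> FL (x * y) (k + l)"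
  unfolding FL_def
proof (elim exE conjE)
  fix u xs v ys
  assume "u dvd 1" "\<forall>y\<in>set xs. irreducible y" "length xs = k" "x = u * prod_list xs"
    "v dvd 1" "\<forall>y\<in>set ys. irreducible y" "length ys = l" "y = v * prod_list ys"
  then show "\<exists>u xs. u dvd 1 \<and> (\<forall>y\<in>set xs. irreducible y) \<and> length xs = k + l \<and> x * y = u * prod_list xs"
    by (intro exI[of _ "u * v"] exI[of _ "xs @ ys"]) (auto simp: mult_ac unit_mult')
qed

lemma FL_exists: "atomic TYPE('a) \<Longrightarrow> (x::'a::idom) \<noteq> 0 \<Longrightarrow> \<exists>k. FL x k"
proof -
  assume a: "atomic TYPE('a)" and x: "x \<noteq> 0"
  show ?thesis
  proof (cases "x dvd 1")
    case True
    then have "FL x 0" unfolding FL_def by (intro exI[of _ x] exI[of _ "[]"]) simp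
    then show ?thesis by blast
  next
    case False
    then obtain xs where "(\<forall>y\<in>set xs. irreducible y)" "x = prod_list xs"
      using a x unfolding atomic_def by blast
    then have "FL x (length xs)" unfolding FL_def by (intro exI[of _ 1] exI[of _ xs]) simp
    then show ?thesis by blast
  qed
qed

lemma FL_nz: "FL x k \<Longrightarrow> x \<noteq> 0"
proof -
  assume "FL x k"
  then obtain u xs where h: "u dvd 1" "\<forall>y\<in>set xs. irreducible y" "x = u * prod_list xs"
    unfolding FL_def by blast
  have "u \<noteq> 0" using h(1) by auto
  moreover have "prod_list xs \<noteq> 0" using prod_list_irr_nz[OF h(2)] .
  ultimately show "x \<noteq> 0" using h(3) by simp
qed

lemma FL_unit: "FL x k \<Longrightarrow> x dvd 1 \<longleftrightarrow> k = 0"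
proof -
  assume "FL x k"
  then obtain u xs where h: "u dvd 1" "\<forall>y\<in>set xs. irreducible y" "length xs = k" "x = u * prod_list xs"
    unfolding FL_def by blast
  have "x dvd 1 \<longleftrightarrow> prod_list xs dvd 1" using h(1,4) unit_mult_iff'[of u "prod_list xs"] by blast
  also have "\<dots> \<longleftrightarrow> xs = []" by (rule prod_list_irr_unit[OF h(2)])
  also have "\<dots> \<longleftrightarrow> k = 0" using h(3) by auto
  finally show ?thesis .
qed

lemma FL_split: assumes "FL x (a + b)" shows "\<exists>y z. x = y * z \<and> FL y a \<and> FL z b"
proof -
  obtain u xs where h: "u dvd 1" "\<forall>y\<in>set xs. irreducible y" "length xs = a + b" "x = u * prod_list xs"
    using assms unfolding FL_def by blast
  have "prod_list xs = prod_list (take a xs) * prod_list (drop a xs)"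
    by (metis append_take_drop_id prod_list.append)
  then have "x = (u * prod_list (take a xs)) * (1 * prod_list (drop a xs))" using h by (simp add: mult_ac)
  moreover have "\<forall>y\<in>set (take a xs). irreducible y" "\<forall>y\<in>set (drop a xs). irreducible y"
    using h(2) by (auto dest: in_set_takeD in_set_dropD)
  moreover have "FL (u * prod_list (take a xs)) a" unfolding FL_def
    using h \<open>\<forall>y\<in>set (take a xs). irreducible y\<close> by (intro exI[of _ u] exI[of _ "take a xs"]) auto
  moreover have "FL (1 * prod_list (drop a xs)) b" unfolding FL_def
    using h \<open>\<forall>y\<in>set (drop a xs). irreducible y\<close> by (intro exI[of _ 1] exI[of _ "drop a xs"]) auto
  ultimately show ?thesis by blast
qed

lemma FL_1_irr: "FL x 1 \<Longrightarrow> irreducible x"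
  unfolding FL_def
proof (elim exE conjE)
  fix u xs assume "u dvd 1" "\<forall>y\<in>set xs. irreducible y" "length xs = 1" "x = u * prod_list xs"
  then show "irreducible x" by (cases xs) (auto simp: irr_unit_mult)
qed

lemma Z_use:
  assumes "Z_property TYPE('a::idom)"
    and "a \<noteq> 0" "\<not> a dvd 1" "b \<noteq> 0" "\<not> b dvd 1" "c \<noteq> 0" "\<not> c dvd 1"
    "d \<noteq> 0" "\<not> d dvd 1" "e \<noteq> 0" "\<not> (e::'a) dvd 1" "a * b * c = d * e"
  shows "\<exists>\<delta> D D'. \<not> \<delta> dvd 1 \<and> \<delta> dvd a * b \<and> \<delta> dvd D \<and> ((D = d \<and> D' = e) \<or> (D = e \<and> D' = d))"
proof -
  have "common_nonunit (a * b) d \<or> common_nonunit (a * b) e"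
    using assms unfolding Z_property_def by blast
  then show ?thesis unfolding common_nonunit_def by blast
qed

definition GL :: "'a::idom itself \<Rightarrow> nat \<Rightarrow> bool" where
  "GL T k \<longleftrightarrow> (\<forall>(x::'a) l. FL x k \<longrightarrow> FL x l \<longrightarrow> k = l)"

lemma Z_GL:
  assumes at: "atomic TYPE('a::idom)" and Z: "Z_property TYPE('a)"
  shows "GL TYPE('a) k"
proof (induction k rule: less_induct)
  case (less k)
  show ?case unfolding GL_def
  proof (intro allI impI)
    fix x :: 'a and l assume xk: "FL x k" and xl: "FL x l"
    show "k = l"
    proof (rule ccontr)
      assume ne: "k \<noteq> l"
      have "\<not> l < k"
      proof
        assume "l < k"
        then have "GL TYPE('a) l" using less by blast
        then show False using xk xl ne unfolding GL_def by blast
      qed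
      then have lk: "k < l" using ne by simp
      have G: "\<And>j (y::'a) i. j < k \<Longrightarrow> FL y j \<Longrightarrow> FL y i \<Longrightarrow> j = i"
        using less unfolding GL_def by blast
      consider "k = 0" | "k = 1" | "k = 2" | "k \<ge> 3" by linarith
      then show False
      proof cases
        case 1
        then show False using xk xl lk FL_unit by blast
      next
        case 2
        obtain y z where yz: "x = y * z" "FL y 1" "FL z (l - 1)"
          using FL_split[of x 1 "l - 1"] xl lk by auto
        have "irreducible x" using xk 2 FL_1_irr by blast
        then have "y dvd 1 \<or> z dvd 1" using yz(1) irreducibleD by blast
        then show False using yz FL_unit lk 2 by auto
      next
        case 3
        obtain q1 R where qR: "x = q1 * R" "FL q1 1" "FL R (l - 1)"
          using FL_split[of x 1 "l - 1"] xl lk by auto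
        have "1 + (l - 2) = l - 1" using lk 3 by linarith
        then obtain q2 Q3 where qQ: "R = q2 * Q3" "FL q2 1" "FL Q3 (l - 2)"
          using FL_split[of R 1 "l - 2"] qR(3) by auto
        have "FL x (1 + 1)" using xk 3 one_add_one by metis
        then obtain p1 p2 where pp: "x = p1 * p2" "FL p1 1" "FL p2 1"
          using FL_split[of x 1 1] by blast
        have nn: "\<And>y j. FL y j \<Longrightarrow> j > 0 \<Longrightarrow> y \<noteq> 0 \<and> \<not> y dvd 1"
          using FL_nz FL_unit by blast
        have eq: "q1 * q2 * Q3 = p1 * p2" using qR qQ pp by (simp add: mult_ac)
        obtain \<delta> D D' where dd: "\<not> \<delta> dvd 1" "\<delta> dvd q1 * q2" "\<delta> dvd D"
          "(D = p1 \<and> D' = p2) \<or> (D = p2 \<and> D' = p1)"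
          using Z_use[OF Z _ _ _ _ _ _ _ _ _ _ eq] nn qR qQ pp lk 3 by fastforce
        have FD: "FL D 1" "FL D' 1" using dd(4) pp by auto
        have DD: "D * D' = q1 * q2 * Q3" using dd(4) eq by (auto simp: mult_ac)
        obtain \<epsilon> where \<epsilon>: "q1 * q2 = \<delta> * \<epsilon>" using dd(2) by blast
        obtain \<eta> where \<eta>: "D = \<delta> * \<eta>" using dd(3) by blast
        have "D \<noteq> 0" using FD(1) FL_nz by blast
        moreover have "q1 * q2 \<noteq> 0" using FL_nz[OF qR(2)] FL_nz[OF qQ(2)] by simp
        ultimately have nz: "\<delta> \<noteq> 0" "\<eta> \<noteq> 0" "\<epsilon> \<noteq> 0" using \<eta> \<epsilon> by auto
        obtain r where r: "FL \<delta> r" using FL_exists[OF at] nz by blast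
        obtain t where t: "FL \<epsilon> t" using FL_exists[OF at] nz by blast
        obtain h where h: "FL \<eta> h" using FL_exists[OF at] nz by blast
        have r1: "r \<ge> 1" using r dd(1) FL_unit by fastforce
        have "r + h = 1" using G[of 1 D "r + h"] FD FL_mult[OF r h] \<eta> 3 by auto
        have c: "\<epsilon> * Q3 = \<eta> * D'"
        proof -
          have "\<delta> * (\<epsilon> * Q3) = \<delta> * (\<eta> * D')" using DD \<epsilon> \<eta> by (metis mult.assoc)
          then show ?thesis using nz by simp
        qed
        have "t + (l - 2) = h + 1" using G[of "h + 1" "\<eta> * D'" "t + (l - 2)"] FL_mult[OF h FD(2)]
            FL_mult[OF t qQ(3)] c \<open>r + h = 1\<close> r1 3 by auto
        then have "t = 0" using lk 3 \<open>r + h = 1\<close> r1 by linarith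
        have "FL (q1 * q2) 2" using FL_mult[OF qR(2) qQ(2)] by (simp add: numeral_2_eq_2)
        moreover have "r = 1" using \<open>r + h = 1\<close> r1 by linarith
        moreover have "FL (q1 * q2) (r + t)" using FL_mult[OF r t] \<epsilon> by simp
        ultimately have "FL (q1 * q2) 2" "FL (q1 * q2) 1" using \<open>t = 0\<close> by auto
        then show False using G[of 1 "q1 * q2" 2] 3 by auto
      next
        case 4
        obtain p1 R where pR: "x = p1 * R" "FL p1 1" "FL R (k - 1)"
          using FL_split[of x 1 "k - 1"] xk 4 by auto
        have "1 + (k - 2) = k - 1" using 4 by linarith
        then obtain p2 P3 where pP: "R = p2 * P3" "FL p2 1" "FL P3 (k - 2)"
          using FL_split[of R 1 "k - 2"] pR(3) by auto
        obtain d e where de: "x = d * e" "FL d 1" "FL e (l - 1)"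
          using FL_split[of x 1 "l - 1"] xl lk by auto
        have nn: "\<And>y j. FL y j \<Longrightarrow> j > 0 \<Longrightarrow> y \<noteq> 0 \<and> \<not> y dvd 1"
          using FL_nz FL_unit by blast
        have eq: "p1 * p2 * P3 = d * e" using pR pP de by (simp add: mult_ac)
        obtain \<delta> D D' where dd: "\<not> \<delta> dvd 1" "\<delta> dvd p1 * p2" "\<delta> dvd D"
          "(D = d \<and> D' = e) \<or> (D = e \<and> D' = d)"
          using Z_use[OF Z _ _ _ _ _ _ _ _ _ _ eq] nn pR pP de lk 4 by fastforce
        have "\<exists>s. FL D s \<and> FL D' (l - s) \<and> 1 \<le> s \<and> s < l"
        proof (cases "D = d \<and> D' = e")
          case True then show ?thesis using de lk 4 by (intro exI[of _ 1]) auto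
        next
          case False then have "D = e" "D' = d" using dd(4) by auto
          moreover have "l - (l - 1) = 1" using lk by auto
          ultimately show ?thesis using de lk 4 by (intro exI[of _ "l - 1"]) auto
        qed
        then obtain s where FD: "FL D s" "FL D' (l - s)" "1 \<le> s" "s < l" by blast
        have DD: "D * D' = p1 * p2 * P3" using dd(4) eq by (auto simp: mult_ac)
        obtain \<epsilon> where \<epsilon>: "p1 * p2 = \<delta> * \<epsilon>" using dd(2) by blast
        obtain \<eta> where \<eta>: "D = \<delta> * \<eta>" using dd(3) by blast
        have "D \<noteq> 0" using FD(1) FL_nz by blast
        moreover have "p1 * p2 \<noteq> 0" using FL_nz[OF pR(2)] FL_nz[OF pP(2)] by simp
        ultimately have nz: "\<delta> \<noteq> 0" "\<eta> \<noteq> 0" "\<epsilon> \<noteq> 0" using \<eta> \<epsilon> by auto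
        obtain r where r: "FL \<delta> r" using FL_exists[OF at] nz by blast
        obtain t where t: "FL \<epsilon> t" using FL_exists[OF at] nz by blast
        obtain h where h: "FL \<eta> h" using FL_exists[OF at] nz by blast
        have r1: "r \<ge> 1" using r dd(1) FL_unit by fastforce
        have "FL (p1 * p2) 2" using FL_mult[OF pR(2) pP(2)] by (simp add: numeral_2_eq_2)
        then have "r + t = 2" using G[of 2 "p1 * p2" "r + t"] FL_mult[OF r t] \<epsilon> 4 by auto
        have c: "\<epsilon> * P3 = \<eta> * D'"
        proof -
          have "\<delta> * (\<epsilon> * P3) = \<delta> * (\<eta> * D')" using DD \<epsilon> \<eta> by (metis mult.assoc)
          then show ?thesis using nz by simp
        qed
        have "t + (k - 2) = h + (l - s)" using G[of "t + (k - 2)" "\<epsilon> * P3" "h + (l - s)"]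
            FL_mult[OF h FD(2)] FL_mult[OF t pP(3)] c \<open>r + t = 2\<close> r1 4 by auto
        moreover have "r + h < k" using \<open>t + (k - 2) = h + (l - s)\<close> \<open>r + t = 2\<close> FD(4) 4 by linarith
        moreover have "FL D (r + h)" using FL_mult[OF r h] \<eta> by simp
        ultimately have "s = r + h" using G[of "r + h" D s] FD(1) by auto
        then show False using \<open>r + t = 2\<close> \<open>t + (k - 2) = h + (l - s)\<close> lk 4 FD by linarith
      qed
    qed
  qed
qed



lemma unit_cancel_dvd: "w dvd (1::'a::comm_semiring_1) \<Longrightarrow> p dvd y * w \<Longrightarrow> p dvd y"
proof -
  assume "w dvd 1" "p dvd y * w"
  then obtain w' where "1 = w * w'" by blast
  have "p dvd y * w * w'" using \<open>p dvd y * w\<close> by (rule dvd_mult2)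
  then show ?thesis using \<open>1 = w * w'\<close> by (simp add: mult.assoc)
qed

lemma HFD_unit:
  assumes hf: "half_factorial TYPE('a::idom)"
    and "a \<noteq> 0" "\<not> a dvd 1" "b \<noteq> 0" "\<not> b dvd 1"
    and irr: "irreducible \<alpha>" "irreducible \<beta>" and eq: "a * b * w = \<alpha> * (\<beta>::'a)"
  shows "w dvd 1"
proof (rule ccontr)
  assume nw: "\<not> w dvd 1"
  have at: "atomic TYPE('a)" using hf unfolding half_factorial_def by blast
  have ab0: "\<alpha> * \<beta> \<noteq> 0" using irr unfolding irreducible_def by simp
  then have "w \<noteq> 0" using eq by auto
  obtain as where as: "as \<noteq> []" "\<forall>y\<in>set as. irreducible y" "a = prod_list as"
    using at assms(2,3) unfolding atomic_def by blast
  obtain bs where bs: "bs \<noteq> []" "\<forall>y\<in>set bs. irreducible y" "b = prod_list bs"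
    using at assms(4,5) unfolding atomic_def by blast
  obtain ws where ws: "ws \<noteq> []" "\<forall>y\<in>set ws. irreducible y" "w = prod_list ws"
    using at nw \<open>w \<noteq> 0\<close> unfolding atomic_def by blast
  have nu: "\<not> \<alpha> * \<beta> dvd 1" using irr irreducible_not_unit unit_mult_iff' by blast
  have "\<alpha> * \<beta> = prod_list (as @ bs @ ws)" using eq as bs ws by (simp add: mult.assoc)
  moreover have "\<alpha> * \<beta> = prod_list [\<alpha>, \<beta>]" by simp
  moreover have "\<forall>y\<in>set (as @ bs @ ws). irreducible y" using as bs ws by auto
  moreover have "\<forall>y\<in>set [\<alpha>, \<beta>]. irreducible y" using irr by auto
  ultimately have "length (as @ bs @ ws) = length [\<alpha>, \<beta>]"
    using hf ab0 nu unfolding half_factorial_def by blast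
  moreover have "length (as @ bs @ ws) \<ge> 3" using as(1) bs(1) ws(1)
    by (cases as; cases bs; cases ws) auto
  ultimately show False by simp
qed

lemma HFD_Z:
  assumes hf: "half_factorial TYPE('a::idom)" and C: "condition_C TYPE('a)"
  shows "Z_property TYPE('a)"
  unfolding Z_property_def
proof (intro allI impI)
  fix a b c d e :: 'a
  assume h: "a \<noteq> 0 \<and> \<not> a dvd 1 \<and> b \<noteq> 0 \<and> \<not> b dvd 1 \<and> c \<noteq> 0 \<and> \<not> c dvd 1 \<and>
     d \<noteq> 0 \<and> \<not> d dvd 1 \<and> e \<noteq> 0 \<and> \<not> e dvd 1 \<and> a * b * c = d * e"
  show "common_nonunit (a * b) d \<or> common_nonunit (a * b) e"
  proof (rule ccontr)
    assume "\<not> (common_nonunit (a * b) d \<or> common_nonunit (a * b) e)"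
    then have nd: "\<not> common_nonunit (a * b) d" and ne: "\<not> common_nonunit (a * b) e" by auto
    define x where "x = a * b"
    have x0: "x \<noteq> 0" using h x_def by simp
    obtain \<alpha> where \<alpha>: "irreducible \<alpha>" "emb \<alpha> \<in> v_closure (emb ` gen_ideal {x, d})"
      using C prim[OF nd] unfolding condition_C_def x_def by blast
    obtain \<beta> where \<beta>: "irreducible \<beta>" "emb \<beta> \<in> v_closure (emb ` gen_ideal {x, e})"
      using C prim[OF ne] unfolding condition_C_def x_def by blast
    have xc: "d * e = x * c" using h x_def by simp
    have h1: "x dvd d * \<beta>"
      by (rule vdiv[OF \<beta>(2) x0]) (simp_all add: xc)
    have h2: "x dvd \<beta> * \<alpha>"
      by (rule vdiv[OF \<alpha>(2) x0]) (use h1 in \<open>simp_all add: mult.commute\<close>)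
    obtain w where w: "\<beta> * \<alpha> = x * w" using h2 by blast
    have "a * b * w = \<alpha> * \<beta>" using w x_def by (simp add: mult.commute)
    then have wu: "w dvd 1" using HFD_unit[OF hf _ _ _ _ \<alpha>(1) \<beta>(1)] h by blast
    obtain k where k: "d * \<beta> = x * k" using h1 by blast
    have "\<beta> * (d * w) = \<beta> * (\<alpha> * k)"
    proof -
      have "\<beta> * (d * w) = (d * \<beta>) * w" by (simp add: mult_ac)
      also have "\<dots> = (x * w) * k" using k by (simp add: mult_ac)
      also have "\<dots> = \<beta> * (\<alpha> * k)" using w by (simp add: mult_ac)
      finally show ?thesis .
    qed
    moreover have "\<beta> \<noteq> 0" using \<beta>(1) unfolding irreducible_def by simp
    ultimately have "d * w = \<alpha> * k" by simp
    then have "\<alpha> dvd d * w" by simp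
    then have ad: "\<alpha> dvd d" using unit_cancel_dvd[OF wu] by blast
    have "\<alpha> dvd x * w" using w by (metis dvd_triv_right)
    then have ax: "\<alpha> dvd x" using unit_cancel_dvd[OF wu] by blast
    have "common_nonunit (a * b) d"
      unfolding common_nonunit_def using ad ax \<alpha>(1) irreducible_not_unit x_def by blast
    then show False using nd by blast
  qed
qed

theorem mainTheorem2:
  assumes "atomic TYPE('a::idom)"
    and "integrally_closed TYPE('a)"
    and "condition_C TYPE('a)"
  shows "half_factorial TYPE('a) \<longleftrightarrow> Z_property TYPE('a)"
proof
  assume "half_factorial TYPE('a)"
  then show "Z_property TYPE('a)" using HFD_Z assms(3) by blast
next
  assume Z: "Z_property TYPE('a)"
  have G: "\<And>k. GL TYPE('a) k" using Z_GL[OF assms(1) Z] .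
  show "half_factorial TYPE('a)"
    unfolding half_factorial_def
  proof (intro conjI allI impI)
    show "atomic TYPE('a)" by (rule assms(1))
    fix x :: 'a and xs ys
    assume h: "x \<noteq> 0 \<and> \<not> x dvd 1 \<and> (\<forall>y\<in>set xs. irreducible y) \<and> x = prod_list xs \<and>
        (\<forall>y\<in>set ys. irreducible y) \<and> x = prod_list ys"
    have "FL x (length xs)" unfolding FL_def using h by (intro exI[of _ 1] exI[of _ xs]) auto
    moreover have "FL x (length ys)" unfolding FL_def using h by (intro exI[of _ 1] exI[of _ ys]) auto
    ultimately show "length xs = length ys" using G unfolding GL_def by blast
  qed
qed

end
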